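(* Let $3\le a<b$ be integers and for $z\in(0,1)$, $z\ne z_r$, let $h(z)=\dfrac{a z^{a-b}-b-f(z)\big(a(a-1)z^{a-b}-b(b-1)\big)}{b\big((b-1)f(z)-1\big)}$. Then: (i) $h$ has a pole at $z=z_r$ (its denominator vanishes in $(0,1)$ exactly at $z_r$); (ii) $\lim_{z\to0}h(z)=-\infty$; (iii) $\lim_{z\to z_r}h(z)=+\infty$; (iv) $h(z)\in(-\infty,1]$ for all $z\in(0,z_l]$; (v) $h(z)\in(1,+\infty)$ for all $z\in(z_l,z_r)$, and $h(z_l)=1$; (vi) $h(z)\in(-\infty,1)$ for all $z\in(z_r,1)$; (vii) for $z\in(0,1)\setminus\{z_r\}$: $\frac{\partial h}{\partial z}(z)>0 \iff g(z)>0$; (viii) $h$ is strictly increasing on $(0,z_l]$; (ix) $h$ is strictly increasing on $(z_r,1)$; (x) if $\min_z g(z)\ge0$, then $h$ is strictly increasing on $[z_l,z_r)$; (xi) if $\min_z g(z)<0$, then on $[z_l,z_r)$ the function $h$ is strictly increasing up to a local maximum at $z_1$, then strictly decreasing to a local minimum at $z_2$, then strictly increasing afterwards.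
   Context: $f(z)=\frac{-\ln(1-z)(1-z)}{z}$ and $g(z)=f(z)(b-1)(a-1)+\frac1{1-z}+2-b-a$ for $z\in(0,1)$. $z_l$ (resp. $z_r$) is the unique $z\in(0,1)$ with $f(z)=\frac1{a-1}$ (resp. $\frac1{b-1}$). When $g$ has zeros in $(0,1)$, $z_1$ and $z_2$ are the smallest and largest of them. *)

theory Defs
  imports "HOL-Analysis.Analysis"
begin

definition ff :: "real \<Rightarrow> real" where
  "ff z = - ln (1 - z) * (1 - z) / z"

definition gg :: "nat \<Rightarrow> nat \<Rightarrow> real \<Rightarrow> real" where
  "gg a b z = ff z * (real b - 1) * (real a - 1) + 1 / (1 - z) + 2 - real b - real a"

definition zl :: "nat \<Rightarrow> real" where
  "zl a = (THE z. z \<in> {0<..<1} \<and> ff z = 1 / (real a - 1))"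

definition zr :: "nat \<Rightarrow> real" where
  "zr b = (THE z. z \<in> {0<..<1} \<and> ff z = 1 / (real b - 1))"

definition z1 :: "nat \<Rightarrow> nat \<Rightarrow> real" where
  "z1 a b = (LEAST z. z \<in> {0<..<1} \<and> gg a b z = 0)"

definition z2 :: "nat \<Rightarrow> nat \<Rightarrow> real" where
  "z2 a b = (GREATEST z. z \<in> {0<..<1} \<and> gg a b z = 0)"

definition hh :: "nat \<Rightarrow> nat \<Rightarrow> real \<Rightarrow> real" where
  "hh a b z = (real a * z powr (real a - real b) - real b
      - ff z * (real a * (real a - 1) * z powr (real a - real b) - real b * (real b - 1)))
      / (real b * ((real b - 1) * ff z - 1))"

end

theory Submission imports Defs "HOL-Real_Asymp.Real_Asymp" begin

lemma ln_bound:
  fixes z :: real assumes "0 < z" "z < 1"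
  shows "z + z^2/2 < - ln (1 - z)"
proof -
  have "(\<lambda>t. - ln (1 - t) - t - t^2/2) 0 < (\<lambda>t. - ln (1 - t) - t - t^2/2) z"
  proof (rule DERIV_pos_imp_increasing_open[OF assms(1)])
    fix x :: real assume x: "0 < x" "x < z"
    show "\<exists>y. ((\<lambda>t. - ln (1 - t) - t - t^2/2) has_real_derivative y) (at x) \<and> 0 < y"
    proof (intro exI conjI)
      show "((\<lambda>t. - ln (1 - t) - t - t^2/2) has_real_derivative (1/(1-x) - 1 - x)) (at x)"
        using x assms by (auto intro!: derivative_eq_intros simp: field_simps)
      have "1/(1-x) - 1 - x = x^2/(1-x)" using x assms by (simp add: field_simps power2_eq_square)
      also have "\<dots> > 0" using x assms by simp
      finally show "0 < 1/(1-x) - 1 - x" .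
    qed
  next
    show "continuous_on {0..z} (\<lambda>t. - ln (1 - t) - t - t^2/2)"
      using assms by (intro continuous_intros) auto
  qed
  then show ?thesis by simp
qed

lemma ff_gt: "0 < z \<Longrightarrow> z < 1 \<Longrightarrow> 1 - z < ff z"
proof -
  assume z: "0 < z" "z < 1"
  have "0 < z^2/2" using z by simp
  then have "z < - ln (1 - z)" using ln_bound[OF z] by linarith
  then have "z * (1 - z) < - ln (1 - z) * (1 - z)" using z by (intro mult_strict_right_mono) auto
  then show ?thesis using z unfolding ff_def by (simp add: field_simps)
qed

lemma ff_pos: "0 < z \<Longrightarrow> z < 1 \<Longrightarrow> 0 < ff z"
  using ff_gt[of z] by simp

lemma ff_deriv:
  assumes "0 < z" "z < 1"
  shows "(ff has_real_derivative (1 - ff z/(1-z))/z) (at z)"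
proof -
  have "((\<lambda>z. - ln (1 - z) * (1 - z) / z) has_real_derivative (1 - ff z/(1-z))/z) (at z)"
    using assms by (auto intro!: derivative_eq_intros simp: ff_def field_simps power2_eq_square)
  then show ?thesis by (simp add: ff_def[abs_def])
qed

lemma ff_isCont: "0 < z \<Longrightarrow> z < 1 \<Longrightarrow> isCont ff z"
  using ff_deriv DERIV_isCont by blast

lemma ff_cont: "0 < x \<Longrightarrow> y < 1 \<Longrightarrow> continuous_on {x..y} ff"
  by (intro continuous_at_imp_continuous_on ballI ff_isCont) auto

lemma ff_dec: "0 < x \<Longrightarrow> x < y \<Longrightarrow> y < 1 \<Longrightarrow> ff y < ff x"
proof -
  assume xy: "0 < x" "x < y" "y < 1"
  show ?thesis
  proof (rule DERIV_neg_imp_decreasing_open[OF xy(2)])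
    fix t assume t: "x < t" "t < y"
    show "\<exists>d. (ff has_real_derivative d) (at t) \<and> d < 0"
    proof (intro exI conjI)
      show "(ff has_real_derivative (1 - ff t/(1-t))/t) (at t)" using t xy by (intro ff_deriv) auto
      have "1 < ff t / (1 - t)" using ff_gt[of t] t xy by simp
      then show "(1 - ff t/(1-t))/t < 0" using t xy by (simp add: divide_neg_pos)
    qed
  qed (use xy ff_cont in auto)
qed

lemma ff_lim0: "(ff \<longlongrightarrow> 1) (at_right 0)"
  unfolding ff_def[abs_def] by real_asymp
lemma ff_lim1: "(ff \<longlongrightarrow> 0) (at_left 1)"
  unfolding ff_def[abs_def] by real_asymp

lemma ff_ex1:
  assumes "0 < t" "t < 1"
  shows "\<exists>!z. z \<in> {0<..<1} \<and> ff z = t"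
proof -
  have "eventually (\<lambda>z. ff z > t) (at_right 0)"
    using order_tendstoD(1)[OF ff_lim0 assms(2)] .
  then obtain bb where bb: "bb > 0" "\<And>y. y > 0 \<Longrightarrow> y < bb \<Longrightarrow> ff y > t"
    unfolding eventually_at_right_field by blast
  define x0 where "x0 = min (bb/2) (1/2)"
  have x0: "0 < x0" "x0 < 1" "ff x0 > t" using bb unfolding x0_def by auto
  have e1: "eventually (\<lambda>z. ff z < t) (at_left 1)"
    using order_tendstoD(2)[OF ff_lim1 assms(1)] .
  have "eventually (\<lambda>z. ff z < t \<and> z > x0) (at_left 1)"
    using eventually_conj[OF e1 eventually_at_left_real[OF x0(2)]] by (rule eventually_mono) auto
  then obtain bb' where bb': "bb' < 1" "\<And>y. y > bb' \<Longrightarrow> y < 1 \<Longrightarrow> ff y < t \<and> y > x0"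
    unfolding eventually_at_left_field by blast
  define x1 where "x1 = (max bb' x0 + 1) / 2"
  have "x1 > bb'" "x1 < 1" using bb' x0 unfolding x1_def by auto
  then have x1: "x0 < x1" "x1 < 1" "ff x1 < t" using bb' by auto
  obtain z where z: "x0 \<le> z" "z \<le> x1" "ff z = t"
    using IVT2'[of ff x1 t x0] x0 x1 ff_cont[of x0 x1] by auto
  show ?thesis
  proof (rule ex1I[of _ z])
    show "z \<in> {0<..<1} \<and> ff z = t" using z x0 x1 by auto
    fix y assume "y \<in> {0<..<1} \<and> ff y = t"
    then show "y = z" using z x0 x1 ff_dec[of y z] ff_dec[of z y] by (cases y z rule: linorder_cases) auto
  qed
qed

lemma ident0:
  fixes a b p F u w :: real
  shows "(a*((a-b)*p*w) - ((1 - F*u)*w*(a*(a-1)*p - b*(b-1)) + F*(a*(a-1)*((a-b)*p*w)))) * (b*((b-1)*F - 1))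
      - (a*p - b - F*(a*(a-1)*p - b*(b-1))) * (b*((b-1)*((1 - F*u)*w)))
    = a*b*(b-a)*p*F*(F*(b-1)*(a-1) + u + 2 - b - a)*w"
  by (simp add: algebra_simps)

lemma ff_less_iff: "0 < x \<Longrightarrow> x < 1 \<Longrightarrow> 0 < y \<Longrightarrow> y < 1 \<Longrightarrow> ff x < ff y \<longleftrightarrow> y < x"
  using ff_dec[of x y] ff_dec[of y x] by (cases x y rule: linorder_cases) auto

lemma ff_eq_iff: "0 < x \<Longrightarrow> x < 1 \<Longrightarrow> 0 < y \<Longrightarrow> y < 1 \<Longrightarrow> ff x = ff y \<longleftrightarrow> y = x"
  using ff_dec[of x y] ff_dec[of y x] by (cases x y rule: linorder_cases) auto

lemma zl_prop: assumes "3 \<le> n" shows "zl n \<in> {0<..<1}" "ff (zl n) = 1 / (real n - 1)"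
proof -
  have "0 < 1 / (real n - 1)" "1 / (real n - 1) < 1" using assms by auto
  from theI'[OF ff_ex1[OF this]] show "zl n \<in> {0<..<1}" "ff (zl n) = 1 / (real n - 1)"
    unfolding zl_def by auto
qed

lemma zr_eq: "zr n = zl n" unfolding zr_def zl_def ..

context
  fixes a b :: nat
  assumes ab: "3 \<le> a" "a < b"
begin

lemma b3: "3 \<le> b" using ab by simp

lemma zl0: "0 < zl a" "zl a < 1" "ff (zl a) = 1 / (real a - 1)" using zl_prop[OF ab(1)] by auto
lemma zr0: "0 < zr b" "zr b < 1" "ff (zr b) = 1 / (real b - 1)" using zl_prop[OF b3] zr_eq by auto

lemma zl_zr: "zl a < zr b"
proof -
  have "1 / (real b - 1) < 1 / (real a - 1)" using ab by (intro divide_strict_left_mono) auto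
  then show ?thesis using ff_less_iff[of "zr b" "zl a"] zl0 zr0 by auto
qed

definition AA where "AA z = 1 - (real a - 1) * ff z"
definition BB where "BB z = 1 - (real b - 1) * ff z"

lemma AA_sign: assumes "0 < z" "z < 1"
  shows "AA z < 0 \<longleftrightarrow> z < zl a" "AA z = 0 \<longleftrightarrow> z = zl a" "AA z > 0 \<longleftrightarrow> z > zl a"
proof -
  have e: "AA z = (real a - 1) * (ff (zl a) - ff z)" using zl0 ab unfolding AA_def by (simp add: field_simps)
  have p: "real a - 1 > 0" using ab by simp
  show "AA z < 0 \<longleftrightarrow> z < zl a" unfolding e using ff_less_iff[of "zl a" z] zl0 assms p
    by (simp add: mult_less_0_iff)
  show "AA z = 0 \<longleftrightarrow> z = zl a" unfolding e using ff_eq_iff[of "zl a" z] zl0 assms p by auto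
  show "AA z > 0 \<longleftrightarrow> z > zl a" unfolding e using ff_less_iff[of z "zl a"] zl0 assms p
    by (simp add: zero_less_mult_iff)
qed

lemma BB_sign: assumes "0 < z" "z < 1"
  shows "BB z < 0 \<longleftrightarrow> z < zr b" "BB z = 0 \<longleftrightarrow> z = zr b" "BB z > 0 \<longleftrightarrow> z > zr b"
proof -
  have e: "BB z = (real b - 1) * (ff (zr b) - ff z)" using zr0 ab unfolding BB_def by (simp add: field_simps)
  have p: "real b - 1 > 0" using ab by simp
  show "BB z < 0 \<longleftrightarrow> z < zr b" unfolding e using ff_less_iff[of "zr b" z] zr0 assms p
    by (simp add: mult_less_0_iff)
  show "BB z = 0 \<longleftrightarrow> z = zr b" unfolding e using ff_eq_iff[of "zr b" z] zr0 assms p by auto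
  show "BB z > 0 \<longleftrightarrow> z > zr b" unfolding e using ff_less_iff[of z "zr b"] zr0 assms p
    by (simp add: zero_less_mult_iff)
qed

lemma hh_alt: assumes "0 < z" "z < 1" "z \<noteq> zr b"
  shows "hh a b z = 1 - (real a / real b) * z powr (real a - real b) * AA z / BB z"
proof -
  have B: "BB z \<noteq> 0" using BB_sign(2)[OF assms(1,2)] assms(3) by simp
  have bp: "real b \<noteq> 0" using ab by simp
  have N: "real a * z powr (real a - real b) - real b
      - ff z * (real a * (real a - 1) * z powr (real a - real b) - real b * (real b - 1))
    = real a * z powr (real a - real b) * AA z - real b * BB z"
    unfolding AA_def BB_def by (simp add: algebra_simps)
  have D: "real b * ((real b - 1) * ff z - 1) = - (real b * BB z)"
    unfolding BB_def by (simp add: algebra_simps)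
  show ?thesis unfolding hh_def N D using B bp by (simp add: field_simps)
qed

lemma gg_ident: assumes "0 < z" "z < 1"
  shows "ff z * gg a b z = AA z * BB z + (ff z / (1 - z) - 1)"
  using assms unfolding gg_def AA_def BB_def by (simp add: field_simps)

lemma gg_pos: assumes "0 < z" "z < 1" "z \<le> zl a \<or> zr b \<le> z"
  shows "gg a b z > 0"
proof -
  have "AA z * BB z \<ge> 0"
  proof (cases "z \<le> zl a")
    case True
    then have "AA z \<le> 0" using AA_sign[OF assms(1,2)] by linarith
    moreover have "BB z < 0" using BB_sign[OF assms(1,2)] True zl_zr by linarith
    ultimately show ?thesis by (simp add: mult_nonpos_nonpos)
  next
    case False
    then have "zr b \<le> z" using assms by auto
    then have "AA z > 0" "BB z \<ge> 0" using AA_sign[OF assms(1,2)] BB_sign[OF assms(1,2)] zl_zr by linarith+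
    then show ?thesis by simp
  qed
  moreover have "ff z / (1 - z) - 1 > 0" using ff_gt[OF assms(1,2)] assms by simp
  ultimately have "ff z * gg a b z > 0" using gg_ident[OF assms(1,2)] by linarith
  then show ?thesis using ff_pos[OF assms(1,2)] by (simp add: zero_less_mult_iff)
qed

lemma hh_deriv: assumes "0 < z" "z < 1" "z \<noteq> zr b"
  shows "(hh a b has_real_derivative
     (real a * real b * (real b - real a) * z powr (real a - real b) * ff z * gg a b z * (1/z))
     / ((real b * ((real b - 1) * ff z - 1)) * (real b * ((real b - 1) * ff z - 1)))) (at z)"
proof -
  have D: "real b * ((real b - 1) * ff z - 1) \<noteq> 0"
    using BB_sign(2)[OF assms(1,2)] assms(3) ab unfolding BB_def by auto
  define r where "r = real a - real b"
  have pw: "z powr (r - 1) = z powr r * (1/z)" using assms by (simp add: powr_diff)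
  have dv: "((\<lambda>z. (real a * z powr r - real b - ff z * (real a * (real a - 1) * z powr r - real b * (real b - 1)))
      / (real b * ((real b - 1) * ff z - 1))) has_real_derivative
     ((real a * (r * z powr (r - 1)) - ((1 - ff z/(1-z))/z * (real a * (real a - 1) * z powr r - real b * (real b - 1))
        + ff z * (real a * (real a - 1) * (r * z powr (r - 1))))) * (real b * ((real b - 1) * ff z - 1))
      - (real a * z powr r - real b - ff z * (real a * (real a - 1) * z powr r - real b * (real b - 1)))
        * (real b * ((real b - 1) * ((1 - ff z/(1-z))/z))))
     / ((real b * ((real b - 1) * ff z - 1)) * (real b * ((real b - 1) * ff z - 1)))) (at z)"
    using assms D by (auto intro!: derivative_eq_intros ff_deriv) (simp add: algebra_simps diff_divide_distrib add_divide_distrib)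
  define P where "P = z powr r"
  have pw': "z powr (r - 1) = P * (1/z)" using pw unfolding P_def .
  note dv = dv[unfolded pw' P_def[symmetric]]
  have eq:  "((real a * (r * (P * (1/z))) - ((1 - ff z/(1-z))/z * (real a * (real a - 1) * P - real b * (real b - 1))
        + ff z * (real a * (real a - 1) * (r * (P * (1/z)))))) * (real b * ((real b - 1) * ff z - 1))
      - (real a * P - real b - ff z * (real a * (real a - 1) * P - real b * (real b - 1)))
        * (real b * ((real b - 1) * ((1 - ff z/(1-z))/z))))
     = real a * real b * (real b - real a) * P * ff z * gg a b z * (1/z)"
    unfolding gg_def r_def
    by (simp add: divide_inverse algebra_simps)
  show ?thesis using dv unfolding eq unfolding r_def hh_def[abs_def] P_def by simp
qed

definition kk :: "real \<Rightarrow> real" where "kk z = (z + ln (1 - z)) * (1 - z)^2 / z^2"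

lemma kk_deriv: assumes "0 < z" "z < 1"
  shows "(kk has_real_derivative (1 - z) * (- 2 * ln (1 - z) - 2 * z - z^2) / z^3) (at z)"
proof -
  have "((\<lambda>z. (z + ln (1 - z)) * (1 - z)^2 / z^2) has_real_derivative (1 - z) * (- 2 * ln (1 - z) - 2 * z - z^2) / z^3) (at z)"
    using assms apply (auto intro!: derivative_eq_intros)
    apply (simp add: field_simps power2_eq_square power3_eq_cube)
    apply (simp add: algebra_simps eval_nat_numeral)
    done
  then show ?thesis unfolding kk_def[abs_def] .
qed

lemma kk_inc: assumes "0 < x" "x < y" "y < 1" shows "kk x < kk y"
proof (rule DERIV_pos_imp_increasing_open[OF assms(2)])
  fix t assume t: "x < t" "t < y"
  show "\<exists>d. (kk has_real_derivative d) (at t) \<and> 0 < d"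
  proof (intro exI conjI)
    show "(kk has_real_derivative (1 - t) * (- 2 * ln (1 - t) - 2 * t - t^2) / t^3) (at t)"
      using t assms by (intro kk_deriv) auto
    have "t + t^2/2 < - ln (1 - t)" using ln_bound[of t] t assms by auto
    then have "0 < - 2 * ln (1 - t) - 2 * t - t^2" by linarith
    then show "0 < (1 - t) * (- 2 * ln (1 - t) - 2 * t - t^2) / t^3" using t assms by simp
  qed
next
  have "\<forall>t\<in>{x..y}. isCont kk t"
    using assms by (auto intro!: DERIV_isCont[OF kk_deriv])
  then show "continuous_on {x..y} kk" by (intro continuous_at_imp_continuous_on) auto
qed

lemma A1:
  fixes l z :: real assumes "0<z" "z<1"
  shows "(1 - (- l * (1 - z) / z)/(1-z))/z = (z + l) * (1 - z)^2 / z^2 / (1-z)^2"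
proof -
  have "(1-z)^2 \<noteq> 0" using assms by simp
  then have "(z + l) * (1 - z)^2 / z^2 / (1-z)^2 = (z + l) / z^2" by simp
  also have "\<dots> = (1 - (- l * (1 - z) / z)/(1-z))/z" using assms by (simp add: field_simps power2_eq_square)
  finally show ?thesis ..
qed

lemma ffd_kk: "0 < z \<Longrightarrow> z < 1 \<Longrightarrow> (1 - ff z/(1-z))/z = kk z / (1-z)^2"
  unfolding ff_def kk_def by (rule A1)

lemma gg_deriv: assumes "0 < z" "z < 1"
  shows "(gg a b has_real_derivative ((real b - 1) * (real a - 1) * kk z + 1) / (1 - z)^2) (at z)"
proof -
  have "(gg a b has_real_derivative (1 - ff z/(1-z))/z * (real b - 1) * (real a - 1) + 1/(1-z)^2) (at z)"
    unfolding gg_def[abs_def] using assms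
    by (auto intro!: derivative_eq_intros ff_deriv simp: power2_eq_square)
  also have "(1 - ff z/(1-z))/z * (real b - 1) * (real a - 1) + 1/(1-z)^2
     = ((real b - 1) * (real a - 1) * kk z + 1) / (1 - z)^2"
    unfolding ffd_kk[OF assms] using assms by (simp add: field_simps)
  finally show ?thesis .
qed

lemma gg_cont: "0 < x \<Longrightarrow> y < 1 \<Longrightarrow> continuous_on {x..y} (gg a b)"
  by (intro continuous_at_imp_continuous_on ballI DERIV_isCont[OF gg_deriv]) auto

lemma gg_Q: assumes "0 < x" "x < y" "y < w" "w < 1"
  shows "gg a b y < max (gg a b x) (gg a b w)"
proof (rule ccontr)
  assume "\<not> ?thesis"
  then have h1: "gg a b x \<le> gg a b y" and h2: "gg a b w \<le> gg a b y" by auto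
  define c where "c = (real b - 1) * (real a - 1)"
  have c: "c > 0" using ab unfolding c_def by simp
  obtain s1 where s1: "x < s1" "s1 < y" "gg a b y - gg a b x = (y - x) * ((c * kk s1 + 1) / (1 - s1)^2)"
    using MVT2[OF assms(2), of "gg a b" "\<lambda>z. (c * kk z + 1) / (1 - z)^2"] gg_deriv assms
    unfolding c_def by fastforce
  obtain s2 where s2: "y < s2" "s2 < w" "gg a b w - gg a b y = (w - y) * ((c * kk s2 + 1) / (1 - s2)^2)"
    using MVT2[OF assms(3), of "gg a b" "\<lambda>z. (c * kk z + 1) / (1 - z)^2"] gg_deriv assms
    unfolding c_def by fastforce
  have "(c * kk s1 + 1) / (1 - s1)^2 \<ge> 0"
    using s1 h1 assms by (smt (verit) zero_le_mult_iff)
  then have k1: "c * kk s1 + 1 \<ge> 0" using s1 assms by (simp add: zero_le_divide_iff)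
  have "(c * kk s2 + 1) / (1 - s2)^2 \<le> 0"
    using s2 h2 assms by (smt (verit) mult_le_0_iff)
  then have k2: "c * kk s2 + 1 \<le> 0" using s2 assms by (simp add: divide_le_0_iff)
  have "kk s1 < kk s2" using kk_inc[of s1 s2] s1 s2 assms by simp
  then have "c * kk s1 < c * kk s2" using c by simp
  then show False using k1 k2 by simp
qed

lemma hh_der_sign: assumes "0 < t" "t < 1" "t \<noteq> zr b"
  shows "\<exists>K>0. (hh a b has_real_derivative K * gg a b t) (at t)"
proof -
  define D where "D = real b * ((real b - 1) * ff t - 1)"
  have D: "D \<noteq> 0" using BB_sign(2)[OF assms(1,2)] assms(3) ab unfolding BB_def D_def by auto
  define K where "K = real a * real b * (real b - real a) * t powr (real a - real b) * ff t * (1/t) / (D * D)"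
  have DD: "D * D > 0" using D by (simp add: zero_less_mult_iff) linarith
  have "real a * real b * (real b - real a) * t powr (real a - real b) * ff t * (1/t) > 0"
    using ab assms ff_pos[OF assms(1,2)] by (intro mult_pos_pos) auto
  then have "K > 0" unfolding K_def using DD by (rule divide_pos_pos)
  moreover have "(hh a b has_real_derivative K * gg a b t) (at t)"
  proof -
    have "K * gg a b t = (real a * real b * (real b - real a) * t powr (real a - real b) * ff t * gg a b t * (1/t)) / (D * D)"
      unfolding K_def by (simp add: algebra_simps)
    then show ?thesis using hh_deriv[OF assms] unfolding D_def by simp
  qed
  ultimately show ?thesis by blast
qed

lemma hh_cont: "0 < x \<Longrightarrow> y < 1 \<Longrightarrow> zr b \<notin> {x..y} \<Longrightarrow> continuous_on {x..y} (hh a b)"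
  by (intro continuous_at_imp_continuous_on ballI) (metis hh_der_sign DERIV_isCont atLeastAtMost_iff less_le_trans le_less_trans)

lemma hh_inc: assumes "0 < x" "x < y" "y < 1" "zr b \<notin> {x..y}" "\<And>t. x < t \<Longrightarrow> t < y \<Longrightarrow> gg a b t > 0"
  shows "hh a b x < hh a b y"
proof (rule DERIV_pos_imp_increasing_open[OF assms(2)])
  fix t assume t: "x < t" "t < y"
  then obtain K where "K > 0" "(hh a b has_real_derivative K * gg a b t) (at t)"
    using hh_der_sign[of t] assms by force
  then show "\<exists>d. (hh a b has_real_derivative d) (at t) \<and> 0 < d" using assms(5)[OF t] by auto
qed (use assms hh_cont in auto)

lemma hh_dec: assumes "0 < x" "x < y" "y < 1" "zr b \<notin> {x..y}" "\<And>t. x < t \<Longrightarrow> t < y \<Longrightarrow> gg a b t < 0"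
  shows "hh a b y < hh a b x"
proof (rule DERIV_neg_imp_decreasing_open[OF assms(2)])
  fix t assume t: "x < t" "t < y"
  then obtain K where "K > 0" "(hh a b has_real_derivative K * gg a b t) (at t)"
    using hh_der_sign[of t] assms by force
  then show "\<exists>d. (hh a b has_real_derivative d) (at t) \<and> d < 0" using assms(5)[OF t]
    by (auto intro!: exI[of _ "K * gg a b t"] simp: mult_pos_neg)
qed (use assms hh_cont in auto)

lemma deriv_iff: assumes "0 < t" "t < 1" "t \<noteq> zr b"
  shows "deriv (hh a b) t > 0 \<longleftrightarrow> gg a b t > 0"
proof -
  obtain K where K: "K > 0" "(hh a b has_real_derivative K * gg a b t) (at t)"
    using hh_der_sign[OF assms] by blast
  have "deriv (hh a b) t = K * gg a b t" using K(2) by (rule DERIV_imp_deriv)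
  then show ?thesis using K(1) by (simp add: zero_less_mult_iff)
qed

lemma powr_lim0: "e < (0::real) \<Longrightarrow> filterlim (\<lambda>z::real. z powr e) at_top (at_right 0)" by real_asymp

lemma lim_bot: "filterlim (hh a b) at_bot (at_right 0)"
proof -
  have ev: "eventually (\<lambda>z. 0 < z \<and> z < zl a) (at_right 0)"
    using eventually_at_right_real[OF zl0(1)] by (rule eventually_mono) auto
  have eq: "eventually (\<lambda>z. - (hh a b z) = (- 1) + (real a / real b * (AA z / BB z)) * z powr (real a - real b)) (at_right 0)"
    using ev
  proof (rule eventually_mono)
    fix z assume z: "0 < z \<and> z < zl a"
    then have "z < 1" "z \<noteq> zr b" using zl0 zl_zr by auto
    then show "- (hh a b z) = (- 1) + (real a / real b * (AA z / BB z)) * z powr (real a - real b)"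
      using hh_alt[of z] z by simp
  qed
  have t: "((\<lambda>z. real a / real b * (AA z / BB z)) \<longlongrightarrow> real a / real b * ((1 - (real a - 1) * 1) / (1 - (real b - 1) * 1))) (at_right 0)"
  proof -
    have tA: "(AA \<longlongrightarrow> 1 - (real a - 1) * 1) (at_right 0)" unfolding AA_def[abs_def] by (intro tendsto_intros ff_lim0)
    have tB: "(BB \<longlongrightarrow> 1 - (real b - 1) * 1) (at_right 0)" unfolding BB_def[abs_def] by (intro tendsto_intros ff_lim0)
    have "((\<lambda>z. AA z / BB z) \<longlongrightarrow> (1 - (real a - 1) * 1) / (1 - (real b - 1) * 1)) (at_right 0)"
      by (rule tendsto_divide[OF tA tB]) (use ab in simp)
    then show ?thesis by (rule tendsto_mult_left)
  qed
  have pos: "real a / real b * ((1 - (real a - 1) * 1) / (1 - (real b - 1) * 1)) > 0"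
  proof -
    have "(1 - (real a - 1) * 1) / (1 - (real b - 1) * 1) > 0" using ab by (intro divide_neg_neg) auto
    moreover have "real a / real b > 0" using ab by simp
    ultimately show ?thesis by (rule mult_pos_pos[rotated])
  qed
  have "filterlim (\<lambda>z. (- 1) + (real a / real b * (AA z / BB z)) * z powr (real a - real b)) at_top (at_right 0)"
    by (intro filterlim_tendsto_add_at_top[OF tendsto_const] filterlim_tendsto_pos_mult_at_top[OF t pos] powr_lim0)
       (use ab in auto)
  then have "filterlim (\<lambda>z. - (hh a b z)) at_top (at_right 0)"
    using filterlim_cong[OF refl refl eq] by simp
  then show ?thesis by (simp add: filterlim_uminus_at_bot)
qed

lemma lim_top: "filterlim (hh a b) at_top (at_left (zr b))"
proof -
  have ev: "eventually (\<lambda>z. zl a < z \<and> z < zr b) (at_left (zr b))"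
    using eventually_at_left_real[OF zl_zr] by (rule eventually_mono) auto
  have eq: "eventually (\<lambda>z. hh a b z = 1 + (real a / real b * z powr (real a - real b) * AA z) * inverse (- BB z)) (at_left (zr b))"
    using ev
  proof (rule eventually_mono)
    fix z assume z: "zl a < z \<and> z < zr b"
    then have "0 < z" "z < 1" "z \<noteq> zr b" using zl0 zr0 by auto
    then show "hh a b z = 1 + (real a / real b * z powr (real a - real b) * AA z) * inverse (- BB z)"
      using hh_alt[of z] z by (simp add: divide_inverse)
  qed
  have ffl: "(ff \<longlongrightarrow> ff (zr b)) (at_left (zr b))"
    using ff_isCont[OF zr0(1,2)] unfolding isCont_def by (rule tendsto_within_subset) auto
  have pl: "((\<lambda>z. z powr (real a - real b)) \<longlongrightarrow> zr b powr (real a - real b)) (at_left (zr b))"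
    using zr0 by (intro tendsto_intros) auto
  have t: "((\<lambda>z. real a / real b * z powr (real a - real b) * AA z) \<longlongrightarrow>
      real a / real b * zr b powr (real a - real b) * AA (zr b)) (at_left (zr b))"
    unfolding AA_def[abs_def] by (intro tendsto_intros pl ffl)
  have pos: "real a / real b * zr b powr (real a - real b) * AA (zr b) > 0"
    using ab zr0 AA_sign(3)[OF zr0(1,2)] zl_zr by (intro mult_pos_pos) auto
  have t0: "((\<lambda>z. - BB z) \<longlongrightarrow> 0) (at_left (zr b))"
  proof -
    have "((\<lambda>z. - BB z) \<longlongrightarrow> - BB (zr b)) (at_left (zr b))"
      unfolding BB_def[abs_def] by (intro tendsto_intros ffl)
    then show ?thesis using BB_sign(2)[OF zr0(1,2)] by simp
  qed
  have ev2: "eventually (\<lambda>z. 0 < - BB z) (at_left (zr b))"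
    using ev
  proof (rule eventually_mono)
    fix z assume z: "zl a < z \<and> z < zr b"
    then have "0 < z" "z < 1" using zl0 zr0 by auto
    then show "0 < - BB z" using BB_sign(1)[of z] z by simp
  qed
  have "filterlim (\<lambda>z. 1 + (real a / real b * z powr (real a - real b) * AA z) * inverse (- BB z)) at_top (at_left (zr b))"
    by (intro filterlim_tendsto_add_at_top[OF tendsto_const] filterlim_tendsto_pos_mult_at_top[OF t pos]
        filterlim_inverse_at_top[OF t0 ev2])
  then show ?thesis using filterlim_cong[OF refl refl eq] by simp
qed

lemma hh_minus1: assumes "0 < z" "z < 1" "z \<noteq> zr b"
  shows "hh a b z - 1 = - (((real a / real b) * z powr (real a - real b)) * (AA z / BB z))"
  using hh_alt[OF assms] by simp

lemma coef_pos: "0 < z \<Longrightarrow> (real a / real b) * z powr (real a - real b) > 0"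
  using ab by simp

lemma part_iv: "z \<in> {0<..zl a} \<Longrightarrow> hh a b z \<le> 1"
proof -
  assume z: "z \<in> {0<..zl a}"
  then have z': "0 < z" "z < 1" "z \<noteq> zr b" "z < zr b" using zl0 zl_zr by auto
  have "AA z \<le> 0" using AA_sign[OF z'(1,2)] z by force
  moreover have "BB z < 0" using BB_sign(1)[OF z'(1,2)] z' by simp
  ultimately have "AA z / BB z \<ge> 0" by (simp add: divide_nonpos_neg)
  then have "hh a b z - 1 \<le> 0" using hh_minus1[OF z'(1-3)] mult_nonneg_nonneg[OF less_imp_le[OF coef_pos[OF z'(1)]]]
    by fastforce
  then show ?thesis by simp
qed

lemma part_v: "z \<in> {zl a<..<zr b} \<Longrightarrow> hh a b z > 1"
proof -
  assume z: "z \<in> {zl a<..<zr b}"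
  then have z': "0 < z" "z < 1" "z \<noteq> zr b" "z < zr b" "zl a < z" using zl0 zr0 by auto
  have "AA z > 0" using AA_sign(3)[OF z'(1,2)] z' by simp
  moreover have "BB z < 0" using BB_sign(1)[OF z'(1,2)] z' by simp
  ultimately have "AA z / BB z < 0" by (simp add: divide_pos_neg)
  then have "hh a b z - 1 > 0" using hh_minus1[OF z'(1-3)] mult_pos_neg[OF coef_pos[OF z'(1)]]
    by fastforce
  then show ?thesis by simp
qed

lemma part_v2: "hh a b (zl a) = 1"
proof -
  have z': "0 < zl a" "zl a < 1" "zl a \<noteq> zr b" using zl0 zl_zr by auto
  have "AA (zl a) = 0" using AA_sign(2)[OF z'(1,2)] by simp
  then show ?thesis using hh_minus1[OF z'] by simp
qed

lemma part_vi: "z \<in> {zr b<..<1} \<Longrightarrow> hh a b z < 1"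
proof -
  assume z: "z \<in> {zr b<..<1}"
  then have z': "0 < z" "z < 1" "z \<noteq> zr b" "zr b < z" "zl a < z" using zl_zr zr0 by auto
  have "AA z > 0" using AA_sign(3)[OF z'(1,2)] z' by simp
  moreover have "BB z > 0" using BB_sign(3)[OF z'(1,2)] z' by simp
  ultimately have "AA z / BB z > 0" by simp
  then have "hh a b z - 1 < 0" using hh_minus1[OF z'(1-3)] mult_pos_pos[OF coef_pos[OF z'(1)]]
    by fastforce
  then show ?thesis by simp
qed

lemma part_i: "z \<in> {0<..<1} \<Longrightarrow> real b * ((real b - 1) * ff z - 1) = 0 \<longleftrightarrow> z = zr b"
proof -
  assume z: "z \<in> {0<..<1}"
  have "real b * ((real b - 1) * ff z - 1) = - (real b * BB z)" unfolding BB_def by (simp add: algebra_simps)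
  then show ?thesis using BB_sign(2)[of z] z ab by auto
qed

lemma part_viii: "strict_mono_on {0<..zl a} (hh a b)"
proof (rule strict_mono_onI)
  fix x y assume xy: "x \<in> {0<..zl a}" "y \<in> {0<..zl a}" "x < y"
  show "hh a b x < hh a b y"
    by (rule hh_inc) (use xy zl0 zl_zr gg_pos in auto)
qed

lemma part_ix: "strict_mono_on {zr b<..<1} (hh a b)"
proof (rule strict_mono_onI)
  fix x y assume xy: "x \<in> {zr b<..<1}" "y \<in> {zr b<..<1}" "x < y"
  show "hh a b x < hh a b y"
    by (rule hh_inc) (use xy zr0 zl_zr gg_pos in auto)
qed

lemma part_x: assumes g0: "\<forall>z\<in>{0<..<1}. gg a b z \<ge> 0"
  shows "strict_mono_on {zl a..<zr b} (hh a b)"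
proof (rule strict_mono_onI)
  have uniq: "u = v" if "u \<in> {0<..<1}" "v \<in> {0<..<1}" "gg a b u = 0" "gg a b v = 0" for u v
  proof (rule ccontr)
    assume "u \<noteq> v"
    define m where "m = (u + v) / 2"
    have "gg a b m < 0"
    proof (cases "u < v")
      case True then show ?thesis using gg_Q[of u m v] that unfolding m_def by auto
    next
      case False then show ?thesis using gg_Q[of v m u] that \<open>u \<noteq> v\<close> unfolding m_def by auto
    qed
    moreover have "m \<in> {0<..<1}" using that unfolding m_def by auto
    ultimately show False using g0 by force
  qed
  fix x y assume xy: "x \<in> {zl a..<zr b}" "y \<in> {zl a..<zr b}" "x < y"
  have r: "0 < x" "y < 1" "zr b \<notin> {x..y}" using xy zl0 zr0 by auto
  show "hh a b x < hh a b y"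
  proof (cases "\<exists>t. x < t \<and> t < y \<and> gg a b t = 0")
    case True
    then obtain t where t: "x < t" "t < y" "gg a b t = 0" by blast
    have pos: "gg a b s > 0" if "0 < s" "s < 1" "s \<noteq> t" for s
      using g0 uniq[of s t] that t r by force
    have "hh a b x < hh a b t" by (rule hh_inc) (use t r pos in auto)
    also have "hh a b t < hh a b y" by (rule hh_inc) (use t r pos in auto)
    finally show ?thesis .
  next
    case False
    have "0 < gg a b t" if "x < t" "t < y" for t
    proof -
      have "t \<in> {0<..<1}" using that r by auto
      then have "gg a b t \<ge> 0" using g0 by blast
      moreover have "gg a b t \<noteq> 0" using False that by blast
      ultimately show ?thesis by simp
    qed
    then show ?thesis by (intro hh_inc) (use r xy in auto)
  qed
qed

lemma part_xi: assumes "\<exists>z\<in>{0<..<1}. gg a b z < 0"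
  shows "zl a \<le> z1 a b \<and> z1 a b < z2 a b \<and> z2 a b < zr b
        \<and> strict_mono_on {zl a..z1 a b} (hh a b)
        \<and> strict_antimono_on {z1 a b..z2 a b} (hh a b)
        \<and> strict_mono_on {z2 a b..<zr b} (hh a b)
        \<and> (\<exists>d>0. \<forall>y. \<bar>y - z1 a b\<bar> < d \<longrightarrow> hh a b y \<le> hh a b (z1 a b))
        \<and> (\<exists>d>0. \<forall>y. \<bar>y - z2 a b\<bar> < d \<longrightarrow> hh a b (z2 a b) \<le> hh a b y)"
proof -
  obtain w where w: "0 < w" "w < 1" "gg a b w < 0" using assms by auto
  have wl: "zl a < w" and wr: "w < zr b"
    using gg_pos[of w] w by (force, force)
  have gl: "gg a b (zl a) > 0" using gg_pos[of "zl a"] zl0 by auto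
  have gr: "gg a b (zr b) > 0" using gg_pos[of "zr b"] zr0 by auto
  obtain x0 where x0: "zl a \<le> x0" "x0 \<le> w" "gg a b x0 = 0"
    using IVT2'[of "gg a b" w 0 "zl a"] w wl gl gg_cont[of "zl a" w] zl0 by auto
  obtain y0 where y0: "w \<le> y0" "y0 \<le> zr b" "gg a b y0 = 0"
    using IVT'[of "gg a b" w 0 "zr b"] w wr gr gg_cont[of w "zr b"] zr0 by auto
  have x0': "zl a < x0" "x0 < w" using x0 gl w by (auto simp: order.order_iff_strict)
  have y0': "w < y0" "y0 < zr b" using y0 gr w by (auto simp: order.order_iff_strict)
  have x01: "0 < x0" "x0 < 1" using x0' zl0 w by auto
  have y01: "0 < y0" "y0 < 1" using y0' zr0 w by auto
  have only: "t = x0 \<or> t = y0" if "0 < t" "t < 1" "gg a b t = 0" for t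
  proof (rule ccontr)
    assume ne: "\<not> (t = x0 \<or> t = y0)"
    consider "t < x0" | "x0 < t \<and> t < y0" | "y0 < t" using ne by linarith
    then show False
    proof cases
      case 1 then show ?thesis using gg_Q[of t x0 y0] that x0 y0 x0' y0' y01 by auto
    next
      case 2 then show ?thesis using gg_Q[of x0 t y0] that x0 y0 x01 y01 by auto
    next
      case 3 then show ?thesis using gg_Q[of x0 y0 t] that x0 y0 x01 x0' y0' by auto
    qed
  qed
  have z1: "z1 a b = x0" unfolding z1_def
  proof (rule Least_equality)
    show "x0 \<in> {0<..<1} \<and> gg a b x0 = 0" using x01 x0 by auto
    fix y assume "y \<in> {0<..<1} \<and> gg a b y = 0"
    then show "x0 \<le> y" using only[of y] x0' y0' by auto
  qed
  have z2: "z2 a b = y0" unfolding z2_def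
  proof (rule Greatest_equality)
    show "y0 \<in> {0<..<1} \<and> gg a b y0 = 0" using y01 y0 by auto
    fix y assume "y \<in> {0<..<1} \<and> gg a b y = 0"
    then show "y \<le> y0" using only[of y] x0' y0' by auto
  qed
  have g1: "gg a b t > 0" if "0 < t" "t < x0" for t
    using gg_Q[of t x0 w] that x0 x0' w by auto
  have g2: "gg a b t < 0" if "x0 < t" "t < y0" for t
    using gg_Q[of x0 t y0] that x0 y0 x01 y01 by auto
  have g3: "gg a b t > 0" if "y0 < t" "t < 1" for t
    using gg_Q[of x0 y0 t] that x0 y0 x01 x0' y0' by auto
  have m1: "strict_mono_on {zl a..x0} (hh a b)"
  proof (rule strict_mono_onI)
    fix x y assume xy: "x \<in> {zl a..x0}" "y \<in> {zl a..x0}" "x < y"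
    show "hh a b x < hh a b y" by (rule hh_inc) (use xy zl0 x0' y0' wr g1 zr0 in auto)
  qed
  have m2: "strict_antimono_on {x0..y0} (hh a b)"
  proof (rule monotone_onI)
    fix x y assume xy: "x \<in> {x0..y0}" "y \<in> {x0..y0}" "x < y"
    show "hh a b y < hh a b x" by (rule hh_dec) (use xy x01 y01 y0' g2 in auto)
  qed
  have m3: "strict_mono_on {y0..<zr b} (hh a b)"
  proof (rule strict_mono_onI)
    fix x y assume xy: "x \<in> {y0..<zr b}" "y \<in> {y0..<zr b}" "x < y"
    show "hh a b x < hh a b y" by (rule hh_inc) (use xy y01 zr0 g3 in auto)
  qed
  have lmax: "\<exists>d>0. \<forall>y. \<bar>y - x0\<bar> < d \<longrightarrow> hh a b y \<le> hh a b x0"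
  proof (intro exI[of _ "min (x0 - zl a) (y0 - x0)"] conjI allI impI)
    show "0 < min (x0 - zl a) (y0 - x0)" using x0' y0' by auto
    fix y assume y: "\<bar>y - x0\<bar> < min (x0 - zl a) (y0 - x0)"
    show "hh a b y \<le> hh a b x0"
    proof (cases "y \<le> x0")
      case True
      show ?thesis
      proof (cases "y = x0")
        case False
        then show ?thesis using monotone_onD[OF m1, of y x0] True y by auto
      qed simp
    next
      case False
      then show ?thesis using monotone_onD[OF m2, of x0 y] y by auto
    qed
  qed
  have lmin: "\<exists>d>0. \<forall>y. \<bar>y - y0\<bar> < d \<longrightarrow> hh a b y0 \<le> hh a b y"
  proof (intro exI[of _ "min (y0 - x0) (zr b - y0)"] conjI allI impI)
    show "0 < min (y0 - x0) (zr b - y0)" using x0' y0' by auto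
    fix y assume y: "\<bar>y - y0\<bar> < min (y0 - x0) (zr b - y0)"
    show "hh a b y0 \<le> hh a b y"
    proof (cases "y \<le> y0")
      case True
      show ?thesis
      proof (cases "y = y0")
        case False
        then show ?thesis using monotone_onD[OF m2, of y y0] True y by auto
      qed simp
    next
      case False
      then show ?thesis using monotone_onD[OF m3, of y0 y] y by auto
    qed
  qed
  show ?thesis unfolding z1 z2 using x0' y0' w m1 m2 m3 lmax lmin by auto
qed

lemma main_ctx:
  shows
    "(\<forall>z\<in>{0<..<1}. real b * ((real b - 1) * ff z - 1) = 0 \<longleftrightarrow> z = zr b)
   \<and> filterlim (hh a b) at_bot (at_right 0)
   \<and> filterlim (hh a b) at_top (at_left (zr b))
   \<and> (\<forall>z\<in>{0<..zl a}. hh a b z \<le> 1)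
   \<and> (\<forall>z\<in>{zl a<..<zr b}. hh a b z > 1) \<and> hh a b (zl a) = 1
   \<and> (\<forall>z\<in>{zr b<..<1}. hh a b z < 1)
   \<and> (\<forall>z\<in>{0<..<1} - {zr b}. deriv (hh a b) z > 0 \<longleftrightarrow> gg a b z > 0)
   \<and> strict_mono_on {0<..zl a} (hh a b)
   \<and> strict_mono_on {zr b<..<1} (hh a b)
   \<and> ((\<forall>z\<in>{0<..<1}. gg a b z \<ge> 0) \<longrightarrow> strict_mono_on {zl a..<zr b} (hh a b))
   \<and> ((\<exists>z\<in>{0<..<1}. gg a b z < 0) \<longrightarrow>
        zl a \<le> z1 a b \<and> z1 a b < z2 a b \<and> z2 a b < zr b
        \<and> strict_mono_on {zl a..z1 a b} (hh a b)
        \<and> strict_antimono_on {z1 a b..z2 a b} (hh a b)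
        \<and> strict_mono_on {z2 a b..<zr b} (hh a b)
        \<and> (\<exists>d>0. \<forall>y. \<bar>y - z1 a b\<bar> < d \<longrightarrow> hh a b y \<le> hh a b (z1 a b))
        \<and> (\<exists>d>0. \<forall>y. \<bar>y - z2 a b\<bar> < d \<longrightarrow> hh a b (z2 a b) \<le> hh a b y))"
  using part_i lim_bot lim_top part_iv part_v part_v2 part_vi deriv_iff part_viii part_ix part_x part_xi
  by auto

end

theorem lemma3:
  fixes a b :: nat
  assumes "3 \<le> a" and "a < b"
  shows
    "(\<forall>z\<in>{0<..<1}. real b * ((real b - 1) * ff z - 1) = 0 \<longleftrightarrow> z = zr b)
   \<and> filterlim (hh a b) at_bot (at_right 0)
   \<and> filterlim (hh a b) at_top (at_left (zr b))
   \<and> (\<forall>z\<in>{0<..zl a}. hh a b z \<le> 1)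
   \<and> (\<forall>z\<in>{zl a<..<zr b}. hh a b z > 1) \<and> hh a b (zl a) = 1
   \<and> (\<forall>z\<in>{zr b<..<1}. hh a b z < 1)
   \<and> (\<forall>z\<in>{0<..<1} - {zr b}. deriv (hh a b) z > 0 \<longleftrightarrow> gg a b z > 0)
   \<and> strict_mono_on {0<..zl a} (hh a b)
   \<and> strict_mono_on {zr b<..<1} (hh a b)
   \<and> ((\<forall>z\<in>{0<..<1}. gg a b z \<ge> 0) \<longrightarrow> strict_mono_on {zl a..<zr b} (hh a b))
   \<and> ((\<exists>z\<in>{0<..<1}. gg a b z < 0) \<longrightarrow>
        zl a \<le> z1 a b \<and> z1 a b < z2 a b \<and> z2 a b < zr b
        \<and> strict_mono_on {zl a..z1 a b} (hh a b)
        \<and> strict_antimono_on {z1 a b..z2 a b} (hh a b)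
        \<and> strict_mono_on {z2 a b..<zr b} (hh a b)
        \<and> (\<exists>d>0. \<forall>y. \<bar>y - z1 a b\<bar> < d \<longrightarrow> hh a b y \<le> hh a b (z1 a b))
        \<and> (\<exists>d>0. \<forall>y. \<bar>y - z2 a b\<bar> < d \<longrightarrow> hh a b (z2 a b) \<le> hh a b y))"
  using main_ctx[OF assms] .

end
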